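(* Let $\Sigma$ be a set of prime numbers, $S$ the multiplicative submonoid of $\mathbb{N}$ generated by $\Sigma$, $\mathbb{Z}[S^{-1}]\subset\mathbb{Q}$ the localization, and $\mathbb{A}_{f}=\prod'_{q\in\Sigma}(\mathbb{Q}_q,\mathbb{Z}_q)$. Let $Q$ be a locally compact topological $\mathbb{A}_f$-module and let $C$ be any compact open subgroup of $Q$. Then $Q$ is generated by $C$ as a $\mathbb{Z}[S^{-1}]$-module. In particular, $Q$ is compactly generated over $\mathbb{Z}[S^{-1}]$ and $\sigma$-compact.
   Context: All topological groups are Hausdorff. The restricted product consists of families $(x_q)$ with $x_q\in\mathbb{Q}_q$ and $x_q\in\mathbb{Z}_q$ for almost all $q$, with neighbourhood basis of $0$ the sets $\prod U_q$ with $U_q$ open neighbourhood of $0$ in $\mathbb{Q}_q$ and $U_q=\mathbb{Z}_q$ for almost all $q$; it is a locally compact topological ring containing $\mathbb{Z}[S^{-1}]$ diagonally. A locally compact topological module is a locally compact abelian group with continuous scalar multiplication. *)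

theory Defs
  imports "HOL-Analysis.Analysis" "HOL-Computational_Algebra.Primes"
begin

text \<open>An element of Q_q is represented by its canonical digit function d : int => int,
  x = sum_k d k * q^k, with digits in {0..q-1} and d k = 0 for k sufficiently negative.\<close>

definition Qp :: "nat \<Rightarrow> (int \<Rightarrow> int) set" where
  "Qp q = {d. (\<forall>k. 0 \<le> d k \<and> d k < int q) \<and> (\<exists>N. \<forall>k<N. d k = 0)}"

definition Zp :: "nat \<Rightarrow> (int \<Rightarrow> int) set" where
  "Zp q = {d \<in> Qp q. \<forall>k<0. d k = 0}"

definition q_integral :: "nat \<Rightarrow> rat \<Rightarrow> bool" where
  "q_integral q r \<longleftrightarrow> \<not> (int q dvd snd (quotient_of r))"

definition qcong :: "nat \<Rightarrow> int \<Rightarrow> rat \<Rightarrow> rat \<Rightarrow> bool" where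
  "qcong q n a b \<longleftrightarrow> q_integral q ((a - b) / (of_nat q powi n))"

definition qtrunc :: "nat \<Rightarrow> (int \<Rightarrow> int) \<Rightarrow> int \<Rightarrow> rat" where
  "qtrunc q d n = (\<Sum>k\<in>{k. k < n \<and> d k \<noteq> 0}. of_int (d k) * of_nat q powi k)"

definition qlim :: "nat \<Rightarrow> (int \<Rightarrow> int) \<Rightarrow> (nat \<Rightarrow> rat) \<Rightarrow> bool" where
  "qlim q d s \<longleftrightarrow> (\<forall>n::int. \<exists>M. \<forall>m\<ge>M. qcong q n (qtrunc q d n) (s m))"

definition qp_of_rat :: "nat \<Rightarrow> rat \<Rightarrow> (int \<Rightarrow> int)" where
  "qp_of_rat q r = (THE d. d \<in> Qp q \<and> qlim q d (\<lambda>_. r))"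

definition qp_add :: "nat \<Rightarrow> (int \<Rightarrow> int) \<Rightarrow> (int \<Rightarrow> int) \<Rightarrow> (int \<Rightarrow> int)" where
  "qp_add q x y = (THE d. d \<in> Qp q \<and> qlim q d (\<lambda>m. qtrunc q x (int m) + qtrunc q y (int m)))"

definition qp_neg :: "nat \<Rightarrow> (int \<Rightarrow> int) \<Rightarrow> (int \<Rightarrow> int)" where
  "qp_neg q x = (THE d. d \<in> Qp q \<and> qlim q d (\<lambda>m. - qtrunc q x (int m)))"

definition qp_mult :: "nat \<Rightarrow> (int \<Rightarrow> int) \<Rightarrow> (int \<Rightarrow> int) \<Rightarrow> (int \<Rightarrow> int)" where
  "qp_mult q x y = (THE d. d \<in> Qp q \<and> qlim q d (\<lambda>m. qtrunc q x (int m) * qtrunc q y (int m)))"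

type_synonym adele = "nat \<Rightarrow> (int \<Rightarrow> int)"

text \<open>Families indexed by primes q in Sigma; components outside Sigma are fixed to the
  zero digit function (so that elements are determined by their Sigma-components).\<close>
definition Af :: "nat set \<Rightarrow> adele set" where
  "Af \<Sigma> = {x. (\<forall>q\<in>\<Sigma>. x q \<in> Qp q) \<and> (\<forall>q. q \<notin> \<Sigma> \<longrightarrow> x q = (\<lambda>_. 0))
               \<and> finite {q\<in>\<Sigma>. x q \<notin> Zp q}}"

definition af_add :: "nat set \<Rightarrow> adele \<Rightarrow> adele \<Rightarrow> adele" where
  "af_add \<Sigma> x y = (\<lambda>q. if q \<in> \<Sigma> then qp_add q (x q) (y q) else (\<lambda>_. 0))"

definition af_neg :: "nat set \<Rightarrow> adele \<Rightarrow> adele" where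
  "af_neg \<Sigma> x = (\<lambda>q. if q \<in> \<Sigma> then qp_neg q (x q) else (\<lambda>_. 0))"

definition af_mult :: "nat set \<Rightarrow> adele \<Rightarrow> adele \<Rightarrow> adele" where
  "af_mult \<Sigma> x y = (\<lambda>q. if q \<in> \<Sigma> then qp_mult q (x q) (y q) else (\<lambda>_. 0))"

definition af_of_rat :: "nat set \<Rightarrow> rat \<Rightarrow> adele" where
  "af_of_rat \<Sigma> r = (\<lambda>q. if q \<in> \<Sigma> then qp_of_rat q r else (\<lambda>_. 0))"

text \<open>Basic neighbourhoods x + prod_q q^(n q) Z_q with n q = 0 for almost all q in Sigma
  (the sets q^n Z_q, n in Z, form a neighbourhood basis of 0 in Q_q).\<close>
definition af_nbhd :: "nat set \<Rightarrow> adele \<Rightarrow> (nat \<Rightarrow> int) \<Rightarrow> adele set" where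
  "af_nbhd \<Sigma> x n = {y \<in> Af \<Sigma>. \<forall>q\<in>\<Sigma>. \<forall>k < n q. qp_add q (y q) (qp_neg q (x q)) k = 0}"

definition af_topology :: "nat set \<Rightarrow> adele topology" where
  "af_topology \<Sigma> = topology_generated_by
     {af_nbhd \<Sigma> x n | x n. x \<in> Af \<Sigma> \<and> finite {q\<in>\<Sigma>. n q \<noteq> 0}}"

definition S_monoid :: "nat set \<Rightarrow> nat set" where
  "S_monoid \<Sigma> = {s. s > 0 \<and> (\<forall>p. prime p \<and> p dvd s \<longrightarrow> p \<in> \<Sigma>)}"

definition Z_S_inv :: "nat set \<Rightarrow> rat set" where
  "Z_S_inv \<Sigma> = {of_int a / of_nat s | a s. s \<in> S_monoid \<Sigma>}"

definition lc_Af_module :: "nat set \<Rightarrow> (adele \<Rightarrow> 'm::{topological_ab_group_add,t2_space} \<Rightarrow> 'm) \<Rightarrow> bool" where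
  "lc_Af_module \<Sigma> sm \<longleftrightarrow>
     locally_compact_space (euclidean :: 'm topology) \<and>
     (\<forall>a\<in>Af \<Sigma>. \<forall>b\<in>Af \<Sigma>. \<forall>x. sm (af_add \<Sigma> a b) x = sm a x + sm b x) \<and>
     (\<forall>a\<in>Af \<Sigma>. \<forall>x y. sm a (x + y) = sm a x + sm a y) \<and>
     (\<forall>a\<in>Af \<Sigma>. \<forall>b\<in>Af \<Sigma>. \<forall>x. sm (af_mult \<Sigma> a b) x = sm a (sm b x)) \<and>
     (\<forall>x. sm (af_of_rat \<Sigma> 1) x = x) \<and>
     continuous_map (prod_topology (af_topology \<Sigma>) euclidean) euclidean (\<lambda>(a, x). sm a x)"

definition ZS_span :: "nat set \<Rightarrow> (adele \<Rightarrow> 'm::ab_group_add \<Rightarrow> 'm) \<Rightarrow> 'm set \<Rightarrow> 'm set" where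
  "ZS_span \<Sigma> sm K = {x. \<exists>(n::nat) r c. (\<forall>i<n. r i \<in> Z_S_inv \<Sigma> \<and> c i \<in> K)
                               \<and> x = (\<Sum>i<n. sm (af_of_rat \<Sigma> (r i)) (c i))}"

end

theory Submission
  imports Defs
begin

lemma qint_iff:
  assumes q: "prime q"
  shows "q_integral q r \<longleftrightarrow> (\<exists>a b. b > 0 \<and> \<not> int q dvd b \<and> r = of_int a / of_int b)"
proof
  assume "q_integral q r"
  then show "\<exists>a b. b > 0 \<and> \<not> int q dvd b \<and> r = of_int a / of_int b"
    unfolding q_integral_def
    by (metis prod.collapse quotient_of_denom_pos quotient_of_div)
next
  assume "\<exists>a b. b > 0 \<and> \<not> int q dvd b \<and> r = of_int a / of_int b"
  then obtain a b where b: "b > 0" "\<not> int q dvd b" and r: "r = of_int a / of_int b" by blast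
  obtain a' b' where qo: "quotient_of r = (a', b')" by (cases "quotient_of r")
  have b'p: "b' > 0" using qo quotient_of_denom_pos by blast
  have cop: "coprime a' b'" using qo quotient_of_coprime by blast
  have "of_int a / of_int b = (of_int a' / of_int b' :: rat)" using r quotient_of_div[OF qo] by simp
  then have "a * b' = a' * b" using b b'p
    by (simp add: field_simps) (metis of_int_eq_iff of_int_mult)
  then have "b' dvd a' * b" by (metis dvd_triv_right)
  then have "b' dvd b" using cop by (metis coprime_commute coprime_dvd_mult_right_iff)
  then have "\<not> int q dvd b'" using b(2) dvd_trans by blast
  then show "q_integral q r" unfolding q_integral_def qo by simp
qed

lemma qint_intro:
  assumes "prime q" "b > 0" "\<not> int q dvd b"
  shows "q_integral q (of_int a / of_int b)"
  using qint_iff[OF assms(1)] assms by blast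

lemma qint_int: "prime q \<Longrightarrow> q_integral q (of_int a)"
  using qint_intro[of q 1 a] not_prime_1 by force

lemma qint_add:
  assumes q: "prime q" and "q_integral q r" "q_integral q s"
  shows "q_integral q (r + s)"
proof -
  obtain a b where ab: "b > 0" "\<not> int q dvd b" "r = of_int a / of_int b" using assms qint_iff by blast
  obtain c d where cd: "d > 0" "\<not> int q dvd d" "s = of_int c / of_int d" using assms qint_iff by blast
  have pq: "prime (int q)" using q by simp
  have e: "r + s = of_int (a*d + c*b) / of_int (b*d)" using ab cd by (simp add: field_simps)
  have "\<not> int q dvd b*d" using ab cd pq by (simp add: prime_dvd_mult_iff)
  then show ?thesis unfolding e by (intro qint_intro[OF q]) (use ab cd in auto)
qed

lemma qint_mult:
  assumes q: "prime q" and "q_integral q r" "q_integral q s"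
  shows "q_integral q (r * s)"
proof -
  obtain a b where ab: "b > 0" "\<not> int q dvd b" "r = of_int a / of_int b" using assms qint_iff by blast
  obtain c d where cd: "d > 0" "\<not> int q dvd d" "s = of_int c / of_int d" using assms qint_iff by blast
  have pq: "prime (int q)" using q by simp
  have e: "r * s = of_int (a*c) / of_int (b*d)" using ab cd by (simp add: field_simps)
  have "\<not> int q dvd b*d" using ab cd pq by (simp add: prime_dvd_mult_iff)
  then show ?thesis unfolding e by (intro qint_intro[OF q]) (use ab cd in auto)
qed

lemma qint_neg:
  assumes q: "prime q" and "q_integral q r"
  shows "q_integral q (- r)"
  using qint_mult[OF q qint_int[OF q, of "-1"] assms(2)] by simp

lemma qint_diff:
  assumes q: "prime q" and "q_integral q r" "q_integral q s"
  shows "q_integral q (r - s)"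
  using qint_add[OF q assms(2) qint_neg[OF q assms(3)]] by simp

lemma qint_div_q:
  assumes q: "prime q" and "q_integral q (of_int c / of_nat q)"
  shows "int q dvd c"
proof -
  obtain a b where ab: "b > 0" "\<not> int q dvd b" "of_int c / of_nat q = (of_int a / of_int b :: rat)"
    using assms qint_iff by blast
  have q0: "q > 0" using q prime_gt_0_nat by blast
  have "c * b = a * int q" using ab q0
    by (simp add: field_simps) (metis of_int_eq_iff of_int_mult of_int_of_nat_eq)
  then have "int q dvd c * b" by (metis dvd_triv_right)
  then show ?thesis using ab q by (simp add: prime_dvd_mult_iff)
qed

definition qv :: "nat \<Rightarrow> int \<Rightarrow> rat \<Rightarrow> bool" where
  "qv q N r \<longleftrightarrow> q_integral q (r / of_nat q powi N)"

lemma qcong_qv: "qcong q n a b \<longleftrightarrow> qv q n (a - b)"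
  by (simp add: qcong_def qv_def)

lemma qv_add: "prime q \<Longrightarrow> qv q N r \<Longrightarrow> qv q N s \<Longrightarrow> qv q N (r + s)"
  unfolding qv_def using qint_add by (simp add: add_divide_distrib)

lemma qv_diff: "prime q \<Longrightarrow> qv q N r \<Longrightarrow> qv q N s \<Longrightarrow> qv q N (r - s)"
  unfolding qv_def using qint_diff by (simp add: diff_divide_distrib)

lemma qv_neg: "prime q \<Longrightarrow> qv q N r \<Longrightarrow> qv q N (- r)"
  unfolding qv_def using qint_neg by simp

lemma qv_zero: "prime q \<Longrightarrow> qv q N 0"
  unfolding qv_def using qint_int[of q 0] by simp

lemma qv_mult: "prime q \<Longrightarrow> qv q N r \<Longrightarrow> qv q M s \<Longrightarrow> qv q (N + M) (r * s)"
proof -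
  assume q: "prime q" and r: "qv q N r" and s: "qv q M s"
  have q0: "(of_nat q :: rat) \<noteq> 0" using q by (simp add: prime_gt_0_nat)
  have e: "r * s / of_nat q powi (N + M) = (r / of_nat q powi N) * (s / of_nat q powi M)"
    using q0 by (simp add: power_int_add)
  show ?thesis using r s qint_mult[OF q] unfolding qv_def e by blast
qed

lemma qv_int_pow: "prime q \<Longrightarrow> N \<le> k \<Longrightarrow> qv q N (of_int c * of_nat q powi k)"
proof -
  assume q: "prime q" and k: "N \<le> k"
  have q0: "(of_nat q :: rat) \<noteq> 0" using q by (simp add: prime_gt_0_nat)
  have k': "k = N + (k - N)" by simp
  have "(of_nat q :: rat) powi k = of_nat q powi N * of_nat q powi (k - N)"
    by (subst k') (rule power_int_add, use q in \<open>simp add: prime_gt_0_nat\<close>)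
  also have "of_nat q powi (k - N) = (of_nat q :: rat) ^ nat (k - N)"
    using k by (simp add: power_int_nonneg_exp)
  finally have "of_int c * of_nat q powi k / of_nat q powi N = (of_int (c * int q ^ nat (k - N)) :: rat)"
    using q0 by simp
  then show ?thesis unfolding qv_def using qint_int[OF q] by metis
qed

lemma qv_int: "prime q \<Longrightarrow> N \<le> 0 \<Longrightarrow> qv q N (of_int c)"
  using qv_int_pow[of q N 0 c] by simp

lemma qv_mono: "prime q \<Longrightarrow> qv q N r \<Longrightarrow> M \<le> N \<Longrightarrow> qv q M r"
proof -
  assume q: "prime q" and r: "qv q N r" and MN: "M \<le> N"
  have q0: "(of_nat q :: rat) \<noteq> 0" using q by (simp add: prime_gt_0_nat)
  have N': "N = M + (N - M)" by simp
  have "(of_nat q :: rat) powi N = of_nat q powi M * of_nat q powi (N - M)"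
    by (subst N') (rule power_int_add, use q in \<open>simp add: prime_gt_0_nat\<close>)
  also have "of_nat q powi (N - M) = (of_nat q :: rat) ^ nat (N - M)"
    using MN by (simp add: power_int_nonneg_exp)
  finally have e: "r / of_nat q powi M = r / of_nat q powi N * of_int (int q ^ nat (N - M))"
    using q0 by (simp add: field_simps)
  show ?thesis using r qint_mult[OF q _ qint_int[OF q]] unfolding qv_def e by blast
qed

lemma qv_sum: "prime q \<Longrightarrow> (\<And>k. k \<in> A \<Longrightarrow> qv q N (f k)) \<Longrightarrow> qv q N (\<Sum>k\<in>A. f k)"
  by (induction A rule: infinite_finite_induct) (auto intro: qv_add qv_zero)

lemma qv_sum_pow: "prime q \<Longrightarrow> (\<And>k. k \<in> A \<Longrightarrow> N \<le> k) \<Longrightarrow>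
   qv q N (\<Sum>k\<in>A. of_int (c k) * of_nat q powi k)"
  by (rule qv_sum) (auto intro: qv_int_pow)

lemma qv_rat_exists:
  assumes q: "prime q" shows "\<exists>N. qv q N r"
proof -
  obtain a b where ab: "quotient_of r = (a, b)" by (cases "quotient_of r")
  have b0: "b > 0" using ab quotient_of_denom_pos by blast
  have r: "r = of_int a / of_int b" using quotient_of_div[OF ab] .
  have q0: "(of_nat q :: rat) \<noteq> 0" using q by (simp add: prime_gt_0_nat)
  define v where "v = multiplicity (int q) b"
  obtain b' where bb: "b = int q ^ v * b'" and nd: "\<not> int q dvd b'"
  proof -
    have "b \<noteq> 0" "\<not> is_unit (int q)" using b0 q by (auto simp: prime_gt_1_nat)
    then show ?thesis using that multiplicity_decompose'[where p="int q" and x=b] unfolding v_def by blast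
  qed
  have b'0: "b' > 0" using b0 bb q
    by (metis zero_less_mult_pos of_nat_0_less_iff prime_gt_0_nat zero_less_power)
  have "r / of_nat q powi (- int v) = of_int a / of_int b'"
    using q0 b0 bb by (simp add: r power_int_minus field_simps)
  then show ?thesis unfolding qv_def using qint_intro[OF q b'0 nd] by metis
qed

context fixes q :: nat assumes q: "prime q" begin

lemma q0: "(of_nat q :: rat) \<noteq> 0" using q by (simp add: prime_gt_0_nat)
lemma qpos: "q > 0" using q by (simp add: prime_gt_0_nat)

lemma qtrunc_eq:
  assumes "\<forall>k<N. d k = 0"
  shows "qtrunc q d n = (\<Sum>k\<in>{N..<n}. of_int (d k) * of_nat q powi k)"
  unfolding qtrunc_def
proof (rule sum.mono_neutral_right[symmetric])
  show "finite {N..<n}" by simp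
  show "{k. k < n \<and> d k \<noteq> 0} \<subseteq> {N..<n}" using assms leI by fastforce
  show "\<forall>i\<in>{N..<n} - {k. k < n \<and> d k \<noteq> 0}. of_int (d i) * of_nat q powi i = 0" by auto
qed


lemma qtrunc_step:
  assumes "\<forall>k<N. d k = 0"
  shows "qtrunc q d (j + 1) = qtrunc q d j + of_int (d j) * of_nat q powi j"
proof -
  let ?N = "min N j"
  have l: "\<forall>k<?N. d k = 0" using assms by auto
  have s: "{?N..<j+1} = insert j {?N..<j}" by auto
  show ?thesis unfolding qtrunc_eq[OF l] s by (simp add: add.commute)
qed

lemma qv_qtrunc: "\<forall>k<N. d k = 0 \<Longrightarrow> qv q N (qtrunc q d n)"
  by (subst qtrunc_eq[of N]) (auto intro!: qv_sum_pow[OF q])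

lemma qtrunc_low: "\<forall>k<N. d k = 0 \<Longrightarrow> n \<le> N \<Longrightarrow> qtrunc q d n = 0"
  by (subst qtrunc_eq[of N]) auto

lemma qtrunc_diff:
  assumes "\<forall>k<N. d k = 0" "n \<le> m"
  shows "qv q n (qtrunc q d m - qtrunc q d n)"
proof -
  let ?N = "min N n"
  have l: "\<forall>k<?N. d k = 0" using assms by auto
  have s: "{?N..<m} = {?N..<n} \<union> {n..<m}" using assms by auto
  have "qtrunc q d m - qtrunc q d n = (\<Sum>k\<in>{n..<m}. of_int (d k) * of_nat q powi k)"
    unfolding qtrunc_eq[OF l] s by (subst sum.union_disjoint) auto
  moreover have "qv q n (\<Sum>k\<in>{n..<m}. of_int (d k) * of_nat q powi k)"
    by (rule qv_sum_pow[OF q]) simp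
  ultimately show ?thesis by simp
qed

lemma digit_eq_of_dvd:
  fixes a b :: int
  assumes "0 \<le> a" "a < int q" "0 \<le> b" "b < int q" "int q dvd a - b"
  shows "a = b"
proof -
  have "a mod int q = b mod int q" using assms(5) mod_eq_dvd_iff by blast
  then show ?thesis using assms by simp
qed

lemma Qp_low: "d \<in> Qp q \<Longrightarrow> \<exists>N. \<forall>k<N. d k = 0"
  unfolding Qp_def by auto

lemma Qp_range: "d \<in> Qp q \<Longrightarrow> 0 \<le> d k \<and> d k < int q"
  unfolding Qp_def by auto

lemma qp_unique_below:
  assumes d: "d \<in> Qp q" and d': "d' \<in> Qp q"
    and h: "\<forall>n'\<le>n. qv q n' (qtrunc q d n' - qtrunc q d' n')"
    and kn: "k < n"
  shows "d k = d' k"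
proof -
  obtain N1 where N1: "\<forall>k<N1. d k = 0" using Qp_low[OF d] by blast
  obtain N2 where N2: "\<forall>k<N2. d' k = 0" using Qp_low[OF d'] by blast
  define N where "N = min N1 N2"
  have lN: "\<forall>k<N. d k = 0" "\<forall>k<N. d' k = 0" using N1 N2 unfolding N_def by auto
  have main: "\<forall>k. k < N + int i \<longrightarrow> k < n \<longrightarrow> d k = d' k" for i
  proof (induction i)
    case 0
    then show ?case using lN by auto
  next
    case (Suc i)
    show ?case
    proof (intro allI impI)
      fix k assume k1: "k < N + int (Suc i)" and k2: "k < n"
      show "d k = d' k"
      proof (cases "k < N + int i")
        case True then show ?thesis using Suc k2 by auto
      next
        case False
        then have kk: "k = N + int i" using k1 by auto
        have eqk: "qtrunc q d k = qtrunc q d' k"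
          unfolding qtrunc_eq[OF lN(1)] qtrunc_eq[OF lN(2)]
          by (rule sum.cong) (use Suc kk k2 in auto)
        have "qv q (k + 1) (qtrunc q d (k+1) - qtrunc q d' (k+1))" using h k2 by auto
        then have "qv q (k + 1) (of_int (d k - d' k) * of_nat q powi k)"
          unfolding qtrunc_step[OF lN(1)] qtrunc_step[OF lN(2)] eqk by (simp add: algebra_simps)
        moreover have "of_int (d k - d' k) * of_nat q powi k / of_nat q powi (k + 1)
              = (of_int (d k - d' k) / of_nat q :: rat)"
          using q0 by (simp add: power_int_add)
        ultimately have "int q dvd d k - d' k"
          unfolding qv_def by (metis qint_div_q[OF q])
        then show ?thesis using Qp_range[OF d] Qp_range[OF d'] digit_eq_of_dvd by blast
      qed
    qed
  qed
  show ?thesis using main[of "nat (k - N + 1)"] kn by auto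
qed

lemma qlim_const_iff: "qlim q d (\<lambda>_. r) \<longleftrightarrow> (\<forall>n. qv q n (qtrunc q d n - r))"
  unfolding qlim_def qcong_qv by auto

lemma qlim_unique:
  assumes d: "d \<in> Qp q" and d': "d' \<in> Qp q" and l: "qlim q d s" and l': "qlim q d' s"
  shows "d = d'"
proof
  fix k
  have "\<forall>n'\<le>k+1. qv q n' (qtrunc q d n' - qtrunc q d' n')"
  proof (intro allI impI)
    fix n' :: int
    obtain M where M: "\<forall>m\<ge>M. qv q n' (qtrunc q d n' - s m)" using l unfolding qlim_def qcong_qv by blast
    obtain M' where M': "\<forall>m\<ge>M'. qv q n' (qtrunc q d' n' - s m)" using l' unfolding qlim_def qcong_qv by blast
    have "qv q n' ((qtrunc q d n' - s (max M M')) - (qtrunc q d' n' - s (max M M')))"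
      by (rule qv_diff[OF q]) (use M M' in auto)
    then show "qv q n' (qtrunc q d n' - qtrunc q d' n')" by simp
  qed
  then show "d k = d' k" using qp_unique_below[OF d d'] by auto
qed

end

context fixes q :: nat assumes q: "prime q" begin

lemma pq: "prime (int q)" using q by simp
lemma Qpos: "int q > 0" using q by (simp add: prime_gt_0_nat)

context fixes a b :: int assumes b0: "b > 0" and bq: "\<not> int q dvd b" begin

lemma cop: "coprime b (int q ^ n)"
proof -
  have "coprime (int q) b" using prime_imp_coprime[OF pq bq] .
  then show ?thesis by (simp add: coprime_commute)
qed

definition PR :: "nat \<Rightarrow> int \<Rightarrow> bool" where
  "PR n R \<longleftrightarrow> 0 \<le> R \<and> R < int q ^ n \<and> int q ^ n dvd (a - R * b)"

lemma PR_exists: "\<exists>R. PR n R"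
proof -
  obtain u v where uv: "u * b + v * int q ^ n = gcd b (int q ^ n)" using bezout_int by blast
  then have uv1: "u * b + v * int q ^ n = 1" using cop[of n] by simp
  define R where "R = (a * u) mod int q ^ n"
  have Qn: "int q ^ n > 0" using Qpos by simp
  define t where "t = a * u div int q ^ n"
  have Req: "R = a * u - int q ^ n * t" unfolding R_def t_def by (metis minus_div_mult_eq_mod mult.commute)
  have h: "1 - u * b = v * int q ^ n" using uv1 by linarith
  have "a - R * b = a * (1 - u * b) + int q ^ n * t * b"
    unfolding Req by (simp add: algebra_simps)
  also have "a * (1 - u * b) + int q ^ n * t * b = int q ^ n * (a * v + t * b)"
    unfolding h by (simp add: algebra_simps)
  finally have "int q ^ n dvd (a - R * b)" by (metis dvd_triv_left)
  moreover have "0 \<le> R" "R < int q ^ n" unfolding R_def using Qn by auto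
  ultimately show ?thesis unfolding PR_def by blast
qed

lemma PR_unique: "PR n R \<Longrightarrow> PR n R' \<Longrightarrow> R = R'"
proof -
  assume R: "PR n R" and R': "PR n R'"
  have "int q ^ n dvd (a - R' * b) - (a - R * b)" using R R' unfolding PR_def by (blast intro: dvd_diff)
  then have "int q ^ n dvd (R - R') * b" by (simp add: algebra_simps)
  then have "int q ^ n dvd (R - R')" using cop[of n]
    by (metis coprime_commute coprime_dvd_mult_left_iff)
  then have "R mod int q ^ n = R' mod int q ^ n" using mod_eq_dvd_iff by blast
  then show "R = R'" using R R' unfolding PR_def by simp
qed

definition res :: "nat \<Rightarrow> int" where "res n = (SOME R. PR n R)"

lemma res_PR: "PR n (res n)"
  unfolding res_def using PR_exists someI_ex by metis

lemma res_0: "res 0 = 0"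
  using res_PR[of 0] unfolding PR_def by simp

definition dd :: "nat \<Rightarrow> int" where "dd n = res (Suc n) div int q ^ n"

lemma res_Suc: "res (Suc n) = res n + int q ^ n * dd n"
proof -
  let ?R = "res (Suc n)" and ?Q = "int q ^ n"
  have Qn: "?Q > 0" using Qpos by simp
  have RP: "PR (Suc n) ?R" by (rule res_PR)
  have d: "?R = ?Q * (?R div ?Q) + ?R mod ?Q" by simp
  have gen: "a - m * b = (a - (Q * t + m) * b) + Q * (t * b)" for m t Q :: int
    by (simp add: algebra_simps)
  have e1: "a - (?R mod ?Q) * b = (a - ?R * b) + ?Q * ((?R div ?Q) * b)"
    using gen[of "?R mod ?Q" "?Q" "?R div ?Q"] d by simp
  have e2: "?Q dvd (a - ?R * b)"
  proof -
    have "?Q dvd int q ^ Suc n" by (rule le_imp_power_dvd) simp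
    then show ?thesis using RP unfolding PR_def using dvd_trans by blast
  qed
  have "?Q dvd a - (?R mod ?Q) * b" unfolding e1 by (rule dvd_add[OF e2 dvd_triv_left])
  then have "PR n (?R mod ?Q)" unfolding PR_def using Qn by simp
  then have "?R mod ?Q = res n" using PR_unique res_PR by blast
  then show ?thesis unfolding dd_def using d by simp
qed

lemma dd_range: "0 \<le> dd n \<and> dd n < int q"
proof -
  let ?R = "res (Suc n)" and ?Q = "int q ^ n"
  have Qn: "?Q > 0" using Qpos by simp
  have RP: "0 \<le> ?R" "?R < int q * ?Q" using res_PR[of "Suc n"] unfolding PR_def by auto
  have "0 \<le> ?R div ?Q" using RP Qn by (simp add: pos_imp_zdiv_nonneg_iff)
  moreover have "?R div ?Q < int q"
  proof (rule ccontr)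
    assume "\<not> ?R div ?Q < int q"
    then have "int q * ?Q \<le> (?R div ?Q) * ?Q" using Qn by (simp add: mult_right_mono)
    also have "\<dots> \<le> ?R" using pos_mod_sign[OF Qn, of ?R] minus_mod_eq_div_mult[of ?R ?Q] by linarith
    finally show False using RP by simp
  qed
  ultimately show ?thesis unfolding dd_def by simp
qed

lemma res_cong: "int q ^ n dvd (a - res n * b)"
  using res_PR[of n] unfolding PR_def by simp

end

lemma qp_exists_const: "\<exists>d\<in>Qp q. qlim q d (\<lambda>_. r)"
proof -
  obtain N where N: "qv q N r" using qv_rat_exists[OF q] by blast
  then obtain a b where ab: "b > 0" "\<not> int q dvd b" "r / of_nat q powi N = of_int a / of_int b"
    unfolding qv_def using qint_iff[OF q] by blast
  have rr: "r = of_nat q powi N * of_int a / of_int b" using ab q0[OF q]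
    by (simp add: field_simps)
  define d where "d k = (if k < N then 0 else dd a b (nat (k - N)))" for k
  have low: "\<forall>k<N. d k = 0" unfolding d_def by auto
  have dQ: "d \<in> Qp q" unfolding Qp_def using low dd_range[OF ab(1,2)] qpos[OF q] unfolding d_def by auto
  have tr: "qtrunc q d (N + int i) = of_nat q powi N * of_int (res a b i)" for i
  proof (induction i)
    case 0
    then show ?case using qtrunc_low[OF q low] res_0[OF ab(1,2)] by simp
  next
    case (Suc i)
    have e: "N + int (Suc i) = N + int i + 1" by simp
    have "qtrunc q d (N + int (Suc i)) = qtrunc q d (N + int i + 1)" unfolding e ..
    also have "\<dots> = qtrunc q d (N + int i) + of_int (d (N + int i)) * of_nat q powi (N + int i)"
      by (rule qtrunc_step[OF q low])
    also have "\<dots> = of_nat q powi N * of_int (res a b i) + of_int (dd a b i) * (of_nat q powi N * of_nat q ^ i)"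
      using Suc q0[OF q] unfolding d_def by (simp add: power_int_add)
    also have "\<dots> = of_nat q powi N * of_int (res a b (Suc i))"
      unfolding res_Suc[OF ab(1,2)] by (simp add: algebra_simps)
    finally show ?case .
  qed
  have "qv q n (qtrunc q d n - r)" for n
  proof (cases "n \<le> N")
    case True
    then show ?thesis using qtrunc_low[OF q low True] qv_neg[OF q qv_mono[OF q N True]] by simp
  next
    case False
    define i where "i = nat (n - N)"
    have n: "n = N + int i" using False unfolding i_def by simp
    obtain c where c: "a - res a b i * b = int q ^ i * c" using res_cong[OF ab(1,2), of i] by blast
    have "(qtrunc q d n - r) / of_nat q powi n = of_int (- c) / of_int b"
    proof -
      have "qtrunc q d n - r = of_nat q powi N * (of_int (res a b i) - of_int a / of_int b)"
        unfolding n tr rr by (simp add: algebra_simps)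
      also have "\<dots> = of_nat q powi N * (of_int (res a b i * b - a) / of_int b)"
        using ab(1) by (simp add: field_simps)
      also have "\<dots> = of_nat q powi N * (of_int (- (int q ^ i * c)) / of_int b)"
        using c by (metis minus_diff_eq)
      finally show ?thesis unfolding n using q0[OF q] ab(1)
        by (simp add: power_int_add field_simps)
    qed
    then show ?thesis unfolding qv_def using qint_intro[OF q ab(1,2)] by metis
  qed
  then show ?thesis using dQ qlim_const_iff[OF q] by blast
qed

lemma qp_of_rat_prop: "qp_of_rat q r \<in> Qp q \<and> qlim q (qp_of_rat q r) (\<lambda>_. r)"
proof -
  have "\<exists>!d. d \<in> Qp q \<and> qlim q d (\<lambda>_. r)"
    using qp_exists_const qlim_unique[OF q] by blast
  then show ?thesis unfolding qp_of_rat_def by (rule theI')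
qed

end

context fixes q :: nat assumes q: "prime q" begin

lemma qtrunc_zero: "qtrunc q (\<lambda>_. 0) n = 0"
  unfolding qtrunc_def by simp

lemma zero_Qp: "(\<lambda>_. 0) \<in> Qp q"
  unfolding Qp_def using qpos[OF q] by auto

lemma qlim_low:
  assumes d: "d \<in> Qp q" and l: "qlim q d (\<lambda>_. r)" and r: "qv q N r"
  shows "\<forall>k<N. d k = 0"
proof -
  have "\<forall>n'\<le>N. qv q n' (qtrunc q d n' - qtrunc q (\<lambda>_. 0) n')"
  proof (intro allI impI)
    fix n' assume n': "n' \<le> N"
    have "qv q n' ((qtrunc q d n' - r) + r)"
      by (rule qv_add[OF q]) (use l qlim_const_iff[OF q] qv_mono[OF q r n'] in auto)
    then show "qv q n' (qtrunc q d n' - qtrunc q (\<lambda>_. 0) n')" by (simp add: qtrunc_zero)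
  qed
  then show ?thesis using qp_unique_below[OF q d zero_Qp] by auto
qed

lemma qlim_local:
  assumes d: "d \<in> Qp q" and d': "d' \<in> Qp q" and l: "qlim q d (\<lambda>_. r)" and l': "qlim q d' (\<lambda>_. r')"
    and rr: "qv q n (r - r')"
  shows "\<forall>k<n. d k = d' k"
proof -
  have "\<forall>n'\<le>n. qv q n' (qtrunc q d n' - qtrunc q d' n')"
  proof (intro allI impI)
    fix n' assume n': "n' \<le> n"
    have h1: "qv q n' (qtrunc q d n' - r)" "qv q n' (qtrunc q d' n' - r')"
      using l l' qlim_const_iff[OF q] by auto
    have "qv q n' ((qtrunc q d n' - r) - (qtrunc q d' n' - r') + (r - r'))"
      by (rule qv_add[OF q qv_diff[OF q h1] qv_mono[OF q rr n']])
    then show "qv q n' (qtrunc q d n' - qtrunc q d' n')" by (simp add: algebra_simps)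
  qed
  then show ?thesis using qp_unique_below[OF q d d'] by auto
qed

lemma qp_exists_cauchy:
  assumes cau: "\<forall>n. \<exists>M. \<forall>m\<ge>M. \<forall>m'\<ge>M. qv q n (s m - s m')"
    and bnd: "\<forall>m. qv q N (s m)"
  shows "\<exists>d\<in>Qp q. qlim q d s"
proof -
  define D where "D m = qp_of_rat q (s m)" for m
  have DQ: "D m \<in> Qp q" "qlim q (D m) (\<lambda>_. s m)" for m
    unfolding D_def using qp_of_rat_prop[OF q] by auto
  have lowD: "\<forall>k<N. D m k = 0" for m using qlim_low[OF DQ(1) DQ(2) bnd[rule_format]] .
  define Mk where "Mk k = (SOME M. \<forall>m\<ge>M. \<forall>m'\<ge>M. qv q (k + 1) (s m - s m'))" for k
  have Mk: "\<forall>m\<ge>Mk k. \<forall>m'\<ge>Mk k. qv q (k + 1) (s m - s m')" for k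
    using someI_ex[OF cau[rule_format, of "k + 1"]] unfolding Mk_def .
  define d where "d k = D (Mk k) k" for k
  have low: "\<forall>k<N. d k = 0" unfolding d_def using lowD by auto
  have dQ: "d \<in> Qp q" unfolding Qp_def d_def using DQ(1) low unfolding Qp_def d_def by auto
  have "\<exists>M. \<forall>m\<ge>M. qcong q n (qtrunc q d n) (s m)" for n
  proof -
    define M0 where "M0 = Max (insert (Mk (n - 1)) (Mk ` {N..<n}))"
    have M0: "Mk (n - 1) \<le> M0" "\<And>k. k \<in> {N..<n} \<Longrightarrow> Mk k \<le> M0"
      unfolding M0_def by auto
    have dig: "d k = D M0 k" if "k \<in> {N..<n}" for k
    proof -
      have "qv q (k + 1) (s (Mk k) - s M0)" using Mk[of k] M0(2)[OF that] by auto
      then show ?thesis unfolding d_def using qlim_local[OF DQ(1) DQ(1) DQ(2) DQ(2)] by auto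
    qed
    have tr: "qtrunc q d n = qtrunc q (D M0) n"
      unfolding qtrunc_eq[OF q low] qtrunc_eq[OF q lowD] using dig by (intro sum.cong) auto
    show ?thesis
    proof (intro exI allI impI)
      fix m assume m: "M0 \<le> m"
      have "qv q n ((qtrunc q (D M0) n - s M0) + (s M0 - s m))"
      proof (rule qv_add[OF q])
        show "qv q n (qtrunc q (D M0) n - s M0)" using DQ(2) qlim_const_iff[OF q] by auto
        show "qv q n (s M0 - s m)" using Mk[of "n - 1"] M0(1) m by auto
      qed
      then show "qcong q n (qtrunc q d n) (s m)" unfolding qcong_qv tr by simp
    qed
  qed
  then show ?thesis using dQ unfolding qlim_def by blast
qed

lemma qp_the:
  assumes "\<exists>d\<in>Qp q. qlim q d s"
  shows "(THE d. d \<in> Qp q \<and> qlim q d s) \<in> Qp q \<and> qlim q (THE d. d \<in> Qp q \<and> qlim q d s) s"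
proof -
  have "\<exists>!d. d \<in> Qp q \<and> qlim q d s" using assms qlim_unique[OF q] by blast
  then show ?thesis by (rule theI')
qed

lemma qp_the_eq:
  assumes "d \<in> Qp q" "qlim q d s"
  shows "(THE d. d \<in> Qp q \<and> qlim q d s) = d"
  using assms qlim_unique[OF q] by (intro the_equality) auto

lemma cauchy_qtrunc:
  assumes d: "d \<in> Qp q"
  shows "\<exists>M. \<forall>m\<ge>M. \<forall>m'\<ge>M. qv q n (qtrunc q d (int m) - qtrunc q d (int m'))"
proof -
  obtain N where N: "\<forall>k<N. d k = 0" using Qp_low[OF q d] by blast
  show ?thesis
  proof (intro exI allI impI)
    fix m m' :: nat assume m: "nat n \<le> m" and m': "nat n \<le> m'"
    have "qv q n ((qtrunc q d (int m) - qtrunc q d n) - (qtrunc q d (int m') - qtrunc q d n))"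
      using m m' by (intro qv_diff[OF q] qtrunc_diff[OF q N]) auto
    then show "qv q n (qtrunc q d (int m) - qtrunc q d (int m'))" by simp
  qed
qed

lemma qp_add_prop:
  assumes x: "x \<in> Qp q" and y: "y \<in> Qp q"
  shows "qp_add q x y \<in> Qp q \<and> qlim q (qp_add q x y) (\<lambda>m. qtrunc q x (int m) + qtrunc q y (int m))"
proof -
  obtain N1 where N1: "\<forall>k<N1. x k = 0" using Qp_low[OF q x] by blast
  obtain N2 where N2: "\<forall>k<N2. y k = 0" using Qp_low[OF q y] by blast
  have "\<exists>d\<in>Qp q. qlim q d (\<lambda>m. qtrunc q x (int m) + qtrunc q y (int m))"
  proof (rule qp_exists_cauchy)
    show "\<forall>m. qv q (min N1 N2) (qtrunc q x (int m) + qtrunc q y (int m))"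
      using N1 N2 by (auto intro!: qv_add[OF q] qv_mono[OF q qv_qtrunc[OF q]])
    show "\<forall>n. \<exists>M. \<forall>m\<ge>M. \<forall>m'\<ge>M. qv q n (qtrunc q x (int m) + qtrunc q y (int m) - (qtrunc q x (int m') + qtrunc q y (int m')))"
    proof
      fix n
      obtain M1 where M1: "\<forall>m\<ge>M1. \<forall>m'\<ge>M1. qv q n (qtrunc q x (int m) - qtrunc q x (int m'))"
        using cauchy_qtrunc[OF x] by blast
      obtain M2 where M2: "\<forall>m\<ge>M2. \<forall>m'\<ge>M2. qv q n (qtrunc q y (int m) - qtrunc q y (int m'))"
        using cauchy_qtrunc[OF y] by blast
      show "\<exists>M. \<forall>m\<ge>M. \<forall>m'\<ge>M. qv q n (qtrunc q x (int m) + qtrunc q y (int m) - (qtrunc q x (int m') + qtrunc q y (int m')))"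
      proof (intro exI allI impI)
        fix m m' assume "max M1 M2 \<le> m" "max M1 M2 \<le> m'"
        then have "qv q n ((qtrunc q x (int m) - qtrunc q x (int m')) + (qtrunc q y (int m) - qtrunc q y (int m')))"
          using M1 M2 by (intro qv_add[OF q]) auto
        then show "qv q n (qtrunc q x (int m) + qtrunc q y (int m) - (qtrunc q x (int m') + qtrunc q y (int m')))"
          by (simp add: algebra_simps)
      qed
    qed
  qed
  then show ?thesis unfolding qp_add_def by (rule qp_the)
qed

lemma qp_neg_prop:
  assumes x: "x \<in> Qp q"
  shows "qp_neg q x \<in> Qp q \<and> qlim q (qp_neg q x) (\<lambda>m. - qtrunc q x (int m))"
proof -
  obtain N1 where N1: "\<forall>k<N1. x k = 0" using Qp_low[OF q x] by blast
  have "\<exists>d\<in>Qp q. qlim q d (\<lambda>m. - qtrunc q x (int m))"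
  proof (rule qp_exists_cauchy)
    show "\<forall>m. qv q N1 (- qtrunc q x (int m))"
      using N1 by (auto intro!: qv_neg[OF q] qv_qtrunc[OF q])
    show "\<forall>n. \<exists>M. \<forall>m\<ge>M. \<forall>m'\<ge>M. qv q n (- qtrunc q x (int m) - - qtrunc q x (int m'))"
    proof
      fix n
      obtain M1 where M1: "\<forall>m\<ge>M1. \<forall>m'\<ge>M1. qv q n (qtrunc q x (int m) - qtrunc q x (int m'))"
        using cauchy_qtrunc[OF x] by blast
      show "\<exists>M. \<forall>m\<ge>M. \<forall>m'\<ge>M. qv q n (- qtrunc q x (int m) - - qtrunc q x (int m'))"
      proof (intro exI allI impI)
        fix m m' assume "M1 \<le> m" "M1 \<le> m'"
        then have "qv q n (- (qtrunc q x (int m) - qtrunc q x (int m')))"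
          using M1 by (intro qv_neg[OF q]) auto
        then show "qv q n (- qtrunc q x (int m) - - qtrunc q x (int m'))" by simp
      qed
    qed
  qed
  then show ?thesis unfolding qp_neg_def by (rule qp_the)
qed

lemma qp_add_local:
  assumes a: "a \<in> Qp q" and a': "a' \<in> Qp q" and w: "w \<in> Qp q"
    and agree: "\<forall>k<n. a k = a' k" and kn: "k < n"
  shows "qp_add q a w k = qp_add q a' w k"
proof -
  have D: "qp_add q a w \<in> Qp q" "qlim q (qp_add q a w) (\<lambda>m. qtrunc q a (int m) + qtrunc q w (int m))"
    using qp_add_prop[OF a w] by auto
  have D': "qp_add q a' w \<in> Qp q" "qlim q (qp_add q a' w) (\<lambda>m. qtrunc q a' (int m) + qtrunc q w (int m))"
    using qp_add_prop[OF a' w] by auto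
  obtain N1 where N1: "\<forall>k<N1. a k = 0" using Qp_low[OF q a] by blast
  obtain N2 where N2: "\<forall>k<N2. a' k = 0" using Qp_low[OF q a'] by blast
  have "\<forall>n'\<le>n. qv q n' (qtrunc q (qp_add q a w) n' - qtrunc q (qp_add q a' w) n')"
  proof (intro allI impI)
    fix n' assume n': "n' \<le> n"
    obtain M where M: "\<forall>m\<ge>M. qcong q n' (qtrunc q (qp_add q a w) n') (qtrunc q a (int m) + qtrunc q w (int m))"
      using D(2) unfolding qlim_def by blast
    obtain M' where M': "\<forall>m\<ge>M'. qcong q n' (qtrunc q (qp_add q a' w) n') (qtrunc q a' (int m) + qtrunc q w (int m))"
      using D'(2) unfolding qlim_def by blast
    define m where "m = max (max M M') (nat n')"
    have mn: "n' \<le> int m" unfolding m_def by auto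
    have l0: "\<forall>k<min N1 N2. a k = 0" "\<forall>k<min N1 N2. a' k = 0" using N1 N2 by auto
    have eqt: "qtrunc q a n' = qtrunc q a' n'"
      unfolding qtrunc_eq[OF q l0(1)] qtrunc_eq[OF q l0(2)] using agree n' by (intro sum.cong) auto
    have "qv q n' ((qtrunc q (qp_add q a w) n' - (qtrunc q a (int m) + qtrunc q w (int m)))
        - (qtrunc q (qp_add q a' w) n' - (qtrunc q a' (int m) + qtrunc q w (int m)))
        + ((qtrunc q a (int m) - qtrunc q a n') - (qtrunc q a' (int m) - qtrunc q a' n')))"
    proof -
      have A: "qv q n' (qtrunc q (qp_add q a w) n' - (qtrunc q a (int m) + qtrunc q w (int m)))"
        using M unfolding qcong_qv m_def by auto
      have B: "qv q n' (qtrunc q (qp_add q a' w) n' - (qtrunc q a' (int m) + qtrunc q w (int m)))"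
        using M' unfolding qcong_qv m_def by auto
      have C: "qv q n' (qtrunc q a (int m) - qtrunc q a n')" by (rule qtrunc_diff[OF q N1 mn])
      have E: "qv q n' (qtrunc q a' (int m) - qtrunc q a' n')" by (rule qtrunc_diff[OF q N2 mn])
      show ?thesis by (rule qv_add[OF q qv_diff[OF q A B] qv_diff[OF q C E]])
    qed
    then show "qv q n' (qtrunc q (qp_add q a w) n' - qtrunc q (qp_add q a' w) n')"
      using eqt by (simp add: algebra_simps)
  qed
  then show ?thesis using qp_unique_below[OF q D(1) D'(1)] kn by auto
qed

lemma qp_of_rat_low: "qv q N r \<Longrightarrow> \<forall>k<N. qp_of_rat q r k = 0"
  using qlim_low qp_of_rat_prop[OF q] by blast

lemma qp_of_rat_0: "qp_of_rat q 0 = (\<lambda>_. 0)"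
  unfolding qp_of_rat_def
  by (rule qp_the_eq[OF zero_Qp]) (simp add: qlim_const_iff[OF q] qtrunc_zero qv_zero[OF q])

lemma qp_add_0: "qp_add q (\<lambda>_. 0) (\<lambda>_. 0) = (\<lambda>_. 0)"
  unfolding qp_add_def
  by (rule qp_the_eq[OF zero_Qp]) (simp add: qlim_def qcong_qv qtrunc_zero qv_zero[OF q])

lemma qp_mult_rat: "qp_mult q (qp_of_rat q r1) (qp_of_rat q r2) = qp_of_rat q (r1 * r2)"
  unfolding qp_mult_def
proof (rule qp_the_eq)
  let ?D = "qp_of_rat q (r1 * r2)"
  show "?D \<in> Qp q" using qp_of_rat_prop[OF q] by blast
  have D: "qv q n (qtrunc q ?D n - r1 * r2)" for n using qp_of_rat_prop[OF q] qlim_const_iff[OF q] by blast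
  have d1: "qv q n (qtrunc q (qp_of_rat q r1) n - r1)" for n using qp_of_rat_prop[OF q] qlim_const_iff[OF q] by blast
  have d2: "qv q n (qtrunc q (qp_of_rat q r2) n - r2)" for n using qp_of_rat_prop[OF q] qlim_const_iff[OF q] by blast
  obtain N2 where N2: "\<forall>k<N2. qp_of_rat q r2 k = 0" using Qp_low[OF q] qp_of_rat_prop[OF q] by blast
  obtain N1 where N1: "qv q N1 r1" using qv_rat_exists[OF q] by blast
  show "qlim q ?D (\<lambda>m. qtrunc q (qp_of_rat q r1) (int m) * qtrunc q (qp_of_rat q r2) (int m))"
    unfolding qlim_def qcong_qv
  proof
    fix n
    let ?t1 = "\<lambda>m::nat. qtrunc q (qp_of_rat q r1) (int m)"
    let ?t2 = "\<lambda>m::nat. qtrunc q (qp_of_rat q r2) (int m)"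
    show "\<exists>M. \<forall>m\<ge>M. qv q n (qtrunc q ?D n - ?t1 m * ?t2 m)"
    proof (intro exI allI impI)
      fix m assume m: "nat (n - min N1 N2) \<le> m"
      have "qv q n ((qtrunc q ?D n - r1 * r2) - ((?t1 m - r1) * ?t2 m + r1 * (?t2 m - r2)))"
      proof -
        have "qv q (int m + N2) ((?t1 m - r1) * ?t2 m)"
          by (rule qv_mult[OF q d1 qv_qtrunc[OF q N2]])
        then have A: "qv q n ((?t1 m - r1) * ?t2 m)" by (rule qv_mono[OF q]) (use m in auto)
        have "qv q (N1 + int m) (r1 * (?t2 m - r2))"
          by (rule qv_mult[OF q N1 d2])
        then have B: "qv q n (r1 * (?t2 m - r2))" by (rule qv_mono[OF q]) (use m in auto)
        show ?thesis by (rule qv_diff[OF q D qv_add[OF q A B]])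
      qed
      then show "qv q n (qtrunc q ?D n - ?t1 m * ?t2 m)" by (simp add: algebra_simps)
    qed
  qed
qed

end

definition Z0 :: adele where "Z0 = (\<lambda>q. \<lambda>_. 0)"

context fixes \<Sigma> :: "nat set" assumes P: "\<forall>p\<in>\<Sigma>. prime p" begin

lemma qp_neg_0: "q \<in> \<Sigma> \<Longrightarrow> qp_neg q (\<lambda>_. 0) = (\<lambda>_. 0)"
  using P unfolding qp_neg_def
  by (intro qp_the_eq zero_Qp) (auto simp add: qlim_def qcong_qv qtrunc_zero qv_zero)

lemma Z0_Af: "Z0 \<in> Af \<Sigma>"
proof -
  have e: "{q\<in>\<Sigma>. Z0 q \<notin> Zp q} = {}" using P zero_Qp unfolding Zp_def Z0_def by auto
  show ?thesis unfolding Af_def mem_Collect_eq e using P zero_Qp unfolding Z0_def by auto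
qed

lemma af_of_rat_0: "af_of_rat \<Sigma> 0 = Z0"
  unfolding af_of_rat_def Z0_def using P qp_of_rat_0 by (auto intro!: ext)

lemma af_add_Z0: "af_add \<Sigma> Z0 Z0 = Z0"
  unfolding af_add_def Z0_def using P qp_add_0 by (auto intro!: ext)

lemma af_of_rat_Af:
  assumes fin: "finite {q\<in>\<Sigma>. \<not> qv q 0 r}"
  shows "af_of_rat \<Sigma> r \<in> Af \<Sigma>"
proof -
  have "{q\<in>\<Sigma>. af_of_rat \<Sigma> r q \<notin> Zp q} \<subseteq> {q\<in>\<Sigma>. \<not> qv q 0 r}"
  proof safe
    fix q assume q: "q \<in> \<Sigma>" "af_of_rat \<Sigma> r q \<notin> Zp q" "qv q 0 r"
    have pq: "prime q" using P q by auto
    have "qp_of_rat q r \<in> Zp q" unfolding Zp_def using qp_of_rat_prop[OF pq] qp_of_rat_low[OF pq q(3)] by auto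
    then show False using q unfolding af_of_rat_def by simp
  qed
  then have "finite {q\<in>\<Sigma>. af_of_rat \<Sigma> r q \<notin> Zp q}" using fin finite_subset by blast
  then show ?thesis unfolding Af_def af_of_rat_def using P qp_of_rat_prop by auto
qed

lemma qv_of_nat: "prime q \<Longrightarrow> qv q 0 (of_nat s)"
  using qv_int[of q 0 "int s"] by simp

lemma af_of_rat_nat_Af: "af_of_rat \<Sigma> (of_nat s) \<in> Af \<Sigma>"
proof (rule af_of_rat_Af)
  have e: "{q\<in>\<Sigma>. \<not> qv q 0 (of_nat s)} = {}" using P qv_of_nat by auto
  show "finite {q\<in>\<Sigma>. \<not> qv q 0 (of_nat s)}" unfolding e by simp
qed

lemma af_of_rat_inv_Af:
  assumes s: "s > 0"
  shows "af_of_rat \<Sigma> (1 / of_nat s) \<in> Af \<Sigma>"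
proof (rule af_of_rat_Af)
  have "{q\<in>\<Sigma>. \<not> qv q 0 (1 / of_nat s)} \<subseteq> {q. q dvd s}"
  proof safe
    fix q assume q: "q \<in> \<Sigma>" "\<not> qv q 0 (1 / of_nat s)"
    have pq: "prime q" using P q by auto
    show "q dvd s"
    proof (rule ccontr)
      assume "\<not> q dvd s"
      then have "\<not> int q dvd int s" by simp
      then have "q_integral q (of_int 1 / of_int (int s))" by (intro qint_intro[OF pq]) (use s in auto)
      then show False using q(2) unfolding qv_def by simp
    qed
  qed
  moreover have "finite {q. q dvd s}" using s by (simp add: finite_divisors_nat)
  ultimately show "finite {q\<in>\<Sigma>. \<not> qv q 0 (1 / of_nat s)}" using finite_subset by blast
qed

lemma af_mult_inv:
  assumes s: "s > 0"
  shows "af_mult \<Sigma> (af_of_rat \<Sigma> (1 / of_nat s)) (af_of_rat \<Sigma> (of_nat s)) = af_of_rat \<Sigma> 1"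
  unfolding af_mult_def af_of_rat_def
proof (intro ext)
  fix q k
  show "(if q \<in> \<Sigma> then qp_mult q (if q \<in> \<Sigma> then qp_of_rat q (1 / of_nat s) else (\<lambda>_. 0))
            (if q \<in> \<Sigma> then qp_of_rat q (of_nat s) else (\<lambda>_. 0)) else (\<lambda>_. 0)) k =
        (if q \<in> \<Sigma> then qp_of_rat q 1 else (\<lambda>_. 0)) k"
    using P qp_mult_rat[of q "1 / of_nat s" "of_nat s"] s by auto
qed

lemma Af_topspace:
  assumes a: "a \<in> Af \<Sigma>"
  shows "a \<in> topspace (af_topology \<Sigma>)"
proof -
  define n where "n q = (if a q \<in> Zp q then 0 else (SOME N. N \<le> 0 \<and> (\<forall>k<N. a q k = 0)))" for q
  have nq: "n q \<le> 0 \<and> (\<forall>k<n q. a q k = 0)" if "q \<in> \<Sigma>" for q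
  proof (cases "a q \<in> Zp q")
    case True then show ?thesis unfolding n_def Zp_def by auto
  next
    case False
    have pq: "prime q" using P that by auto
    have "a q \<in> Qp q" using a that unfolding Af_def by auto
    then obtain N where "\<forall>k<N. a q k = 0" using Qp_low[OF pq] by blast
    then have "\<exists>N. N \<le> 0 \<and> (\<forall>k<N. a q k = 0)" by (intro exI[of _ "min N 0"]) auto
    from someI_ex[OF this] show ?thesis unfolding n_def using False by simp
  qed
  have fin: "finite {q\<in>\<Sigma>. n q \<noteq> 0}"
  proof -
    have "{q\<in>\<Sigma>. n q \<noteq> 0} \<subseteq> {q\<in>\<Sigma>. a q \<notin> Zp q}" unfolding n_def by auto
    then show ?thesis using a unfolding Af_def using finite_subset by blast
  qed
  have "a \<in> af_nbhd \<Sigma> Z0 n"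
    unfolding af_nbhd_def
  proof (safe intro!: a)
    fix q k assume q: "q \<in> \<Sigma>" and k: "k < n q"
    have pq: "prime q" using P q by auto
    have aq: "a q \<in> Qp q" using a q unfolding Af_def by auto
    have "qp_add q (a q) (qp_neg q (Z0 q)) k = qp_add q (\<lambda>_. 0) (\<lambda>_. 0) k"
      unfolding Z0_def qp_neg_0[OF q]
      by (rule qp_add_local[OF pq aq zero_Qp[OF pq] zero_Qp[OF pq] _ k]) (use nq[OF q] in auto)
    then show "qp_add q (a q) (qp_neg q (Z0 q)) k = 0" using qp_add_0[OF pq] by simp
  qed
  moreover have "af_nbhd \<Sigma> Z0 n \<in> {af_nbhd \<Sigma> x n | x n. x \<in> Af \<Sigma> \<and> finite {q\<in>\<Sigma>. n q \<noteq> 0}}"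
    using Z0_Af fin by blast
  ultimately show ?thesis unfolding af_topology_def by auto
qed

lemma gen_nbhd:
  assumes "generate_topology_on {af_nbhd \<Sigma> x n | x n. x \<in> Af \<Sigma> \<and> finite {q\<in>\<Sigma>. n q \<noteq> 0}} W"
  shows "Z0 \<in> W \<Longrightarrow> \<exists>n. finite {q\<in>\<Sigma>. n q \<noteq> 0} \<and> (\<forall>a\<in>Af \<Sigma>. (\<forall>q\<in>\<Sigma>. \<forall>k<n q. a q k = 0) \<longrightarrow> a \<in> W)"
  using assms
proof (induction rule: generate_topology_on.induct)
  case Empty
  then show ?case by simp
next
  case (Int A B)
  obtain n1 where n1: "finite {q\<in>\<Sigma>. n1 q \<noteq> 0}" "\<forall>a\<in>Af \<Sigma>. (\<forall>q\<in>\<Sigma>. \<forall>k<n1 q. a q k = 0) \<longrightarrow> a \<in> A"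
    using Int by auto
  obtain n2 where n2: "finite {q\<in>\<Sigma>. n2 q \<noteq> 0}" "\<forall>a\<in>Af \<Sigma>. (\<forall>q\<in>\<Sigma>. \<forall>k<n2 q. a q k = 0) \<longrightarrow> a \<in> B"
    using Int by auto
  show ?case
  proof (rule exI[of _ "\<lambda>q. max (n1 q) (n2 q)"], rule conjI)
    show "finite {q\<in>\<Sigma>. max (n1 q) (n2 q) \<noteq> 0}"
      by (rule finite_subset[OF _ finite_UnI[OF n1(1) n2(1)]]) auto
    show "\<forall>a\<in>Af \<Sigma>. (\<forall>q\<in>\<Sigma>. \<forall>k<max (n1 q) (n2 q). a q k = 0) \<longrightarrow> a \<in> A \<inter> B"
    proof (intro ballI impI)
      fix a assume a: "a \<in> Af \<Sigma>" and l: "\<forall>q\<in>\<Sigma>. \<forall>k<max (n1 q) (n2 q). a q k = 0"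
      have "a \<in> A" using n1(2) a l by simp
      moreover have "a \<in> B" using n2(2) a l by simp
      ultimately show "a \<in> A \<inter> B" by simp
    qed
  qed
next
  case (UN K)
  then obtain k where k: "k \<in> K" "Z0 \<in> k" by auto
  obtain n where n: "finite {q\<in>\<Sigma>. n q \<noteq> 0}" "\<forall>a\<in>Af \<Sigma>. (\<forall>q\<in>\<Sigma>. \<forall>k<n q. a q k = 0) \<longrightarrow> a \<in> k"
    using UN.IH[OF k] by blast
  show ?case
  proof (rule exI[of _ n], rule conjI)
    show "finite {q\<in>\<Sigma>. n q \<noteq> 0}" by (rule n(1))
    show "\<forall>a\<in>Af \<Sigma>. (\<forall>q\<in>\<Sigma>. \<forall>k<n q. a q k = 0) \<longrightarrow> a \<in> \<Union>K" using n(2) k(1) by blast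
  qed
next
  case (Basis s)
  then obtain y n where s: "s = af_nbhd \<Sigma> y n" and y: "y \<in> Af \<Sigma>" and fin: "finite {q\<in>\<Sigma>. n q \<noteq> 0}" by blast
  have z: "\<forall>q\<in>\<Sigma>. \<forall>k<n q. qp_add q (\<lambda>_. 0) (qp_neg q (y q)) k = 0"
    using Basis.prems unfolding s af_nbhd_def Z0_def by auto
  have "\<forall>a\<in>Af \<Sigma>. (\<forall>q\<in>\<Sigma>. \<forall>k<n q. a q k = 0) \<longrightarrow> a \<in> s"
  proof (intro ballI impI)
    fix a assume a: "a \<in> Af \<Sigma>" and low: "\<forall>q\<in>\<Sigma>. \<forall>k<n q. a q k = 0"
    show "a \<in> s" unfolding s af_nbhd_def
    proof (safe intro!: a)
      fix q k assume q: "q \<in> \<Sigma>" and k: "k < n q"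
      have pq: "prime q" using P q by auto
      have aq: "a q \<in> Qp q" using a q unfolding Af_def by auto
      have yq: "y q \<in> Qp q" using y q unfolding Af_def by auto
      have "qp_add q (a q) (qp_neg q (y q)) k = qp_add q (\<lambda>_. 0) (qp_neg q (y q)) k"
        by (rule qp_add_local[OF pq aq zero_Qp[OF pq] conjunct1[OF qp_neg_prop[OF pq yq]] _ k])
           (use low q in auto)
      then show "qp_add q (a q) (qp_neg q (y q)) k = 0" using z q k by simp
    qed
  qed
  then show ?case using fin by (intro exI[of _ n] conjI)
qed

end

lemma cont_slice:
  assumes cont: "continuous_map (prod_topology T euclidean) euclidean (\<lambda>(a, x). sm a x)"
  shows "continuous_map T euclidean (\<lambda>a. sm a x)"
proof -
  have "continuous_map T (prod_topology T euclidean) (\<lambda>a. (a, x))"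
    by (rule continuous_map_pairedI) (simp_all add: continuous_map_id[unfolded id_def])
  from continuous_map_compose[OF this cont] show ?thesis by (simp add: o_def)
qed

lemma cont_slice2:
  assumes cont: "continuous_map (prod_topology T euclidean) euclidean (\<lambda>(a, x). sm a x)"
    and a: "a \<in> topspace T"
  shows "continuous_on UNIV (sm a)"
proof -
  have "continuous_map euclidean (prod_topology T euclidean) (\<lambda>x. (a, x))"
    by (rule continuous_map_pairedI) (simp_all add: a continuous_map_id[unfolded id_def])
  from continuous_map_compose[OF this cont] have "continuous_map euclidean euclidean (sm a)"
    by (simp add: o_def)
  then show ?thesis by simp
qed

lemma key:
  fixes \<Sigma> :: "nat set"
    and sm :: "adele \<Rightarrow> 'm::{topological_ab_group_add,t2_space} \<Rightarrow> 'm"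
    and C :: "'m set"
  assumes P: "\<forall>p\<in>\<Sigma>. prime p"
    and lc: "lc_Af_module \<Sigma> sm"
    and oC: "open C" and C0: "0 \<in> C"
  shows "\<exists>s\<in>S_monoid \<Sigma>. \<exists>c\<in>C. x = sm (af_of_rat \<Sigma> (1 / of_nat s)) c"
proof -
  let ?T = "af_topology \<Sigma>"
  have cont: "continuous_map (prod_topology ?T euclidean) euclidean (\<lambda>(a, x). sm a x)"
    and addl: "\<forall>a\<in>Af \<Sigma>. \<forall>b\<in>Af \<Sigma>. \<forall>x. sm (af_add \<Sigma> a b) x = sm a x + sm b x"
    and multl: "\<forall>a\<in>Af \<Sigma>. \<forall>b\<in>Af \<Sigma>. \<forall>x. sm (af_mult \<Sigma> a b) x = sm a (sm b x)"
    and onel: "\<forall>x. sm (af_of_rat \<Sigma> 1) x = x"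
    using lc unfolding lc_Af_module_def by auto
  have cf: "continuous_map ?T euclidean (\<lambda>a. sm a x)" by (rule cont_slice[OF cont])
  define W where "W = {a \<in> topspace ?T. sm a x \<in> C}"
  have "openin ?T W" unfolding W_def
    by (rule openin_continuous_map_preimage[OF cf]) (use oC open_openin in auto)
  then have gen: "generate_topology_on {af_nbhd \<Sigma> x n | x n. x \<in> Af \<Sigma> \<and> finite {q\<in>\<Sigma>. n q \<noteq> 0}} W"
    unfolding af_topology_def by (rule openin_topology_generated_by)
  have smZ: "sm Z0 x = 0"
  proof -
    have "sm Z0 x = sm Z0 x + sm Z0 x"
      using addl Z0_Af[OF P] af_add_Z0[OF P] by metis
    then show ?thesis by simp
  qed
  have "Z0 \<in> W" unfolding W_def using Af_topspace[OF P Z0_Af[OF P]] smZ C0 by simp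
  then obtain n where fin: "finite {q\<in>\<Sigma>. n q \<noteq> 0}"
    and nW: "\<forall>a\<in>Af \<Sigma>. (\<forall>q\<in>\<Sigma>. \<forall>k<n q. a q k = 0) \<longrightarrow> a \<in> W"
    using gen_nbhd[OF P gen] by blast
  define F where "F = {q\<in>\<Sigma>. n q \<noteq> 0}"
  define s where "s = (\<Prod>q\<in>F. q ^ nat (n q))"
  have s0: "s > 0" unfolding s_def
    by (rule prod_pos) (use P in \<open>auto simp: F_def prime_gt_0_nat\<close>)
  have sS: "s \<in> S_monoid \<Sigma>" unfolding S_monoid_def
  proof (safe intro!: s0)
    fix p assume p: "prime p" "p dvd s"
    have "\<exists>q\<in>F. p dvd q ^ nat (n q)"
      using prime_dvd_prod_iff[OF fin[folded F_def] p(1)] p(2) unfolding s_def by simp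
    then obtain q where q: "q \<in> F" "p dvd q ^ nat (n q)" by blast
    have "prime q" using q(1) P unfolding F_def by auto
    moreover have "p dvd q" by (rule prime_dvd_power[OF p(1) q(2)])
    ultimately have "p = q" by (rule primes_dvd_imp_eq[OF p(1)])
    then show "p \<in> \<Sigma>" using q(1) unfolding F_def by auto
  qed
  define u where "u = af_of_rat \<Sigma> (of_nat s)"
  have uA: "u \<in> Af \<Sigma>" unfolding u_def by (rule af_of_rat_nat_Af[OF P])
  have "\<forall>q\<in>\<Sigma>. \<forall>k<n q. u q k = 0"
  proof (intro ballI allI impI)
    fix q k assume q: "q \<in> \<Sigma>" and k: "k < n q"
    have pq: "prime q" using P q by auto
    have "qv q (n q) (of_nat s)"
    proof (cases "n q \<le> 0")
      case True then show ?thesis by (rule qv_mono[OF pq qv_of_nat[OF P pq]])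
    next
      case False
      then have qF: "q \<in> F" unfolding F_def using q by auto
      have "s = q ^ nat (n q) * (\<Prod>q\<in>F - {q}. q ^ nat (n q))"
        unfolding s_def using prod.remove[OF fin[folded F_def] qF] by simp
      then have eq: "(of_nat s :: rat) = of_int (int (\<Prod>q\<in>F - {q}. q ^ nat (n q))) * of_nat q powi (n q)"
        using False by (simp add: power_int_def)
      show ?thesis unfolding eq by (rule qv_int_pow[OF pq order_refl])
    qed
    then have "qp_of_rat q (of_nat s) k = 0" using qp_of_rat_low[OF pq] k by blast
    then show "u q k = 0" unfolding u_def af_of_rat_def using q by simp
  qed
  then have "u \<in> W" by (rule mp[OF bspec[OF nW uA]])
  then have cC: "sm u x \<in> C" unfolding W_def by simp
  have vA: "af_of_rat \<Sigma> (1 / of_nat s) \<in> Af \<Sigma>" by (rule af_of_rat_inv_Af[OF P s0])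
  have "x = sm (af_of_rat \<Sigma> 1) x" using onel by simp
  also have "\<dots> = sm (af_mult \<Sigma> (af_of_rat \<Sigma> (1 / of_nat s)) u) x"
    unfolding u_def af_mult_inv[OF P s0] ..
  also have "\<dots> = sm (af_of_rat \<Sigma> (1 / of_nat s)) (sm u x)" by (rule multl[rule_format, OF vA uA])
  finally have xe: "x = sm (af_of_rat \<Sigma> (1 / of_nat s)) (sm u x)" .
  have "\<exists>c\<in>C. x = sm (af_of_rat \<Sigma> (1 / of_nat s)) c"
    by (rule bexI[where x="sm u x" and P="\<lambda>c. x = sm (af_of_rat \<Sigma> (1 / of_nat s)) c", OF xe cC])
  then show ?thesis using sS by (rule bexI)
qed

theorem mainTheorem13:
  fixes \<Sigma> :: "nat set"
    and sm :: "adele \<Rightarrow> 'm::{topological_ab_group_add,t2_space} \<Rightarrow> 'm"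
    and C :: "'m set"
  assumes "\<forall>p\<in>\<Sigma>. prime p"
    and "lc_Af_module \<Sigma> sm"
    and "compact C" and "open C" and "0 \<in> C" and "\<forall>x\<in>C. \<forall>y\<in>C. x - y \<in> C"
  shows "ZS_span \<Sigma> sm C = UNIV
         \<and> (\<exists>K. compact K \<and> ZS_span \<Sigma> sm K = UNIV)
         \<and> (\<exists>K :: nat \<Rightarrow> 'm set. (\<forall>n. compact (K n)) \<and> (\<Union>n. K n) = UNIV)"
proof -
  note P = assms(1) and lc = assms(2)
  have K: "\<exists>s\<in>S_monoid \<Sigma>. \<exists>c\<in>C. x = sm (af_of_rat \<Sigma> (1 / of_nat s)) c" for x
    by (rule key[OF P lc assms(4,5)])
  have span: "ZS_span \<Sigma> sm C = UNIV"
  proof (rule set_eqI, rule iffI)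
    fix x :: 'm
    obtain s c where s: "s \<in> S_monoid \<Sigma>" and c: "c \<in> C" and x: "x = sm (af_of_rat \<Sigma> (1 / of_nat s)) c"
      using K by blast
    have e: "(1 / of_nat s :: rat) = of_int (1::int) / of_nat s" by simp
    have r: "1 / of_nat s \<in> Z_S_inv \<Sigma>" unfolding Z_S_inv_def e using s by blast
    show "x \<in> ZS_span \<Sigma> sm C" unfolding ZS_span_def
      by (rule CollectI, rule exI[of _ 1], rule exI[of _ "\<lambda>_. 1 / of_nat s"], rule exI[of _ "\<lambda>_. c"])
         (use r c x in simp)
  qed simp
  have cont: "continuous_map (prod_topology (af_topology \<Sigma>) euclidean) euclidean (\<lambda>(a, x). sm a x)"
    using lc unfolding lc_Af_module_def by auto
  define KK where "KK n = (if n \<in> S_monoid \<Sigma> then sm (af_of_rat \<Sigma> (1 / of_nat n)) ` C else {})" for n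
  have "compact (KK n)" for n
  proof (cases "n \<in> S_monoid \<Sigma>")
    case True
    then have "n > 0" unfolding S_monoid_def by auto
    then have "af_of_rat \<Sigma> (1 / of_nat n) \<in> topspace (af_topology \<Sigma>)"
      using Af_topspace[OF P af_of_rat_inv_Af[OF P]] by blast
    then have "continuous_on UNIV (sm (af_of_rat \<Sigma> (1 / of_nat n)))" by (rule cont_slice2[OF cont])
    then show ?thesis unfolding KK_def using True assms(3)
      by (auto intro: compact_continuous_image continuous_on_subset)
  next
    case False then show ?thesis unfolding KK_def by simp
  qed
  moreover have "(\<Union>n. KK n) = UNIV"
  proof -
    have mem: "x \<in> (\<Union>n. KK n)" for x :: 'm
    proof -
    obtain s c where s: "s \<in> S_monoid \<Sigma>" and c: "c \<in> C" and x: "x = sm (af_of_rat \<Sigma> (1 / of_nat s)) c"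
      using K by blast
    then have "x \<in> KK s" unfolding KK_def by simp
    then show "x \<in> (\<Union>n. KK n)" by blast
    qed
    have "UNIV = (\<Union>n. KK n)" by (rule UNIV_eq_I, rule mem)
    then show ?thesis by (rule sym)
  qed
  ultimately have c1: "\<forall>n. compact (KK n)" and c2: "(\<Union>n. KK n) = UNIV" by auto
  show ?thesis
  proof (intro conjI)
    show "ZS_span \<Sigma> sm C = UNIV" by (rule span)
    show "\<exists>K. compact K \<and> ZS_span \<Sigma> sm K = UNIV" using assms(3) span by (intro exI[of _ C] conjI)
    show "\<exists>K :: nat \<Rightarrow> 'm set. (\<forall>n. compact (K n)) \<and> (\<Union>n. K n) = UNIV"
      using c1 c2 by (intro exI[of _ KK] conjI)
  qed
qed

end
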